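(* Let $x\in\mathbb{R}^N$, $\eta_x>0$, and let $\phi:\mathbb{R}^N\to\mathbb{R}$ satisfy hypothesis (H) at $x$ with radius $\eta_x$. Then for every $\epsilon\in(0,\eta_x)$, $R>\max\{\eta_x,1\}$ and $\alpha\in(0,\frac12)$: $$\sup_{|y|=1}\Big|\fint_{T^{\epsilon,R,\alpha}(y)}\phi(x+z)\,\mathrm{d}\mu_s^N(z)-\fint_\epsilon^\infty\phi(x+ty)\,\mathrm{d}\mu_s(t)\Big|\le 2\Big(\frac{\epsilon}{R}\Big)^{2s}\|\phi\|_{L^\infty}+\max\Big\{2\big(|p_x|+2C_x\eta_x\big)\eta_x\alpha,\ 3R\,\omega_\phi(\alpha)\Big\}.$$
   Context: Fix $N\ge1$ and $s\in(\frac12,1)$. Let $C_s=\frac{4^s s\,\Gamma(\frac12+s)}{\pi^{1/2}\Gamma(1-s)}$, and let $\mu_s$ be the Borel measure on $(0,\infty)$ with $\mathrm{d}\mu_s(t)=C_s t^{-1-2s}\,\mathrm{d}t$; write $\fint_\epsilon^\infty g\,\mathrm{d}\mu_s=\frac{1}{\mu_s((\epsilon,\infty))}\int_\epsilon^\infty g\,\mathrm{d}\mu_s$. Let $C(N,s)=\frac{4^s s\,\Gamma(\frac N2+s)}{\pi^{N/2}\Gamma(1-s)}$ and let $\mu_s^N$ be the Borel measure on $\mathbb{R}^N\setminus\{0\}$ with $\mathrm{d}\mu_s^N(z)=C(N,s)|z|^{-N-2s}\,\mathrm{d}z$; for a Borel set $T$ with $0<\mu_s^N(T)<\infty$, $\fint_T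 g\,\mathrm{d}\mu_s^N=\frac{1}{\mu_s^N(T)}\int_T g\,\mathrm{d}\mu_s^N$. For $y\neq0$, $0<\epsilon<R$, $\alpha>0$, let $T^{\epsilon,R,\alpha}(y)=\{z\in\mathbb{R}^N:\ \sin\frac{\angle(y,z)}{2}<\alpha,\ \langle y,z\rangle>0,\ \epsilon<|z|<R\}$, where $\angle(y,z)\in[0,\pi]$ is the angle between $y$ and $z$. Hypothesis (H) at $x$ with radius $\eta_x>0$: $\phi:\mathbb{R}^N\to\mathbb{R}$ is bounded and Borel; (i) $\phi\in C^2(\bar B_{\eta_x}(x))$, and we set $p_x=\nabla\phi(x)$, $C_x=\frac12\|\nabla^2\phi\|_{L^\infty(B_{\eta_x}(x))}$; (ii) $\phi$ is bounded and uniformly continuous on $\mathbb{R}^N\setminus\bar B_{\eta_x}(x)$, with modulus $\omega_\phi(a)=\sup\{|\phi(z)-\phi(w)|: z,w\in\mathbb{R}^N\setminus\bar B_{\eta_x}(x),\ |z-w|\le a\}$. *)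

theory Defs
  imports "HOL-Analysis.Analysis"
begin

definition Cs :: "real \<Rightarrow> real" where
  "Cs s = 4 powr s * s * Gamma (1/2 + s) / (sqrt pi * Gamma (1 - s))"

definition mu_s :: "real \<Rightarrow> real measure" where
  "mu_s s = density lborel (\<lambda>t. ennreal (if t > 0 then Cs s * t powr (- 1 - 2 * s) else 0))"

definition avg_mu_s :: "real \<Rightarrow> real \<Rightarrow> (real \<Rightarrow> real) \<Rightarrow> real" where
  "avg_mu_s s eps g = (\<integral>t. indicator {eps<..} t * g t \<partial>(mu_s s)) / measure (mu_s s) {eps<..}"

definition CNs :: "nat \<Rightarrow> real \<Rightarrow> real" where
  "CNs N s = 4 powr s * s * Gamma (real N / 2 + s) / (pi powr (real N / 2) * Gamma (1 - s))"

definition mu_sN :: "real \<Rightarrow> ('a::euclidean_space) measure" where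
  "mu_sN s = density lborel
     (\<lambda>z. ennreal (if z \<noteq> 0 then CNs DIM('a) s * norm z powr (- real DIM('a) - 2 * s) else 0))"

definition avg_mu_sN :: "real \<Rightarrow> ('a::euclidean_space) set \<Rightarrow> ('a \<Rightarrow> real) \<Rightarrow> real" where
  "avg_mu_sN s T g = (\<integral>z. indicator T z * g z \<partial>(mu_sN s)) / measure (mu_sN s) T"

definition vangle :: "'a::euclidean_space \<Rightarrow> 'a \<Rightarrow> real" where
  "vangle y z = arccos ((y \<bullet> z) / (norm y * norm z))"

definition Tset :: "'a::euclidean_space \<Rightarrow> real \<Rightarrow> real \<Rightarrow> real \<Rightarrow> 'a set" where
  "Tset y eps R \<alpha> = {z. sin (vangle y z / 2) < \<alpha> \<and> y \<bullet> z > 0 \<and> eps < norm z \<and> norm z < R}"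

definition modulus_out :: "('a::euclidean_space \<Rightarrow> real) \<Rightarrow> 'a \<Rightarrow> real \<Rightarrow> real \<Rightarrow> real" where
  "modulus_out \<phi> x \<eta> a = (SUP (z, w) \<in> {(z, w). z \<notin> cball x \<eta> \<and> w \<notin> cball x \<eta> \<and> dist z w \<le> a}.
       \<bar>\<phi> z - \<phi> w\<bar>)"

end

theory Submission
  imports Defs
begin

lemma sin_half_sq: "(sin ((x::real)/2))\<^sup>2 = (1 - cos x) / 2"
  using cos_double_sin[of "x/2"] by simp

lemma Tset_char:
  fixes y :: "'a::euclidean_space"
  assumes y: "norm y = 1" and al: "0 < \<alpha>" "\<alpha> < 1/2"
  shows "Tset y e R \<alpha> = {z. (1 - 2*\<alpha>\<^sup>2) * norm z < y \<bullet> z \<and> e < norm z \<and> norm z < R}"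
proof -
  have key: "(sin (vangle y z / 2) < \<alpha> \<and> y \<bullet> z > 0) \<longleftrightarrow> (1 - 2*\<alpha>\<^sup>2) * norm z < y \<bullet> z" for z
  proof (cases "y \<bullet> z > 0")
    case False
    have "\<alpha>*\<alpha> < (1/2)*(1/2)" using al by (intro mult_strict_mono) auto
    hence "0 \<le> (1 - 2*\<alpha>\<^sup>2) * norm z" by (intro mult_nonneg_nonneg) (auto simp: power2_eq_square)
    then show ?thesis using False by auto
  next
    case True
    hence z0: "z \<noteq> 0" by auto
    hence nz: "norm z > 0" by simp
    define c where "c = (y \<bullet> z) / norm z"
    have cs: "y \<bullet> z \<le> norm z" using norm_cauchy_schwarz[of y z] y by simp
    have c1: "c \<le> 1" "c > 0" using cs nz True by (auto simp: c_def field_simps)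
    have v: "vangle y z = arccos c" unfolding vangle_def c_def using y by simp
    have th: "0 \<le> arccos c" "arccos c \<le> pi" using c1 by (auto intro: arccos_lbound arccos_ubound)
    have sn: "sin (arccos c / 2) \<ge> 0" using th by (intro sin_ge_zero) auto
    have sq: "(sin (arccos c / 2))\<^sup>2 = (1 - c)/2" using c1 by (simp add: sin_half_sq)
    have "sin (arccos c / 2) < \<alpha> \<longleftrightarrow> (sin (arccos c / 2))\<^sup>2 < \<alpha>\<^sup>2"
      using sn al by (smt (verit) power_mono power_strict_mono zero_less_numeral)
    also have "\<dots> \<longleftrightarrow> 1 - 2*\<alpha>\<^sup>2 < c" using sq by auto
    also have "\<dots> \<longleftrightarrow> (1 - 2*\<alpha>\<^sup>2) * norm z < y \<bullet> z" using nz by (simp add: c_def field_simps)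
    finally show ?thesis using True v by simp
  qed
  show ?thesis unfolding Tset_def using key by blast
qed

lemma theta_bound:
  fixes c \<alpha> :: real
  assumes al: "0 < \<alpha>" "\<alpha> < 1/2" and c: "1 - 2*\<alpha>\<^sup>2 < c" "c \<le> 1"
  shows "arccos c < 54/25 * \<alpha>"
proof -
  have a2: "\<alpha>*\<alpha> < (1/2)*(1/2)" using al by (intro mult_strict_mono) auto
  have cm: "-1 \<le> c" using c a2 by (simp add: power2_eq_square)
  define \<beta> where "\<beta> = arccos c / 2"
  have b0: "0 \<le> \<beta>" "\<beta> \<le> pi/2" using cm c arccos_lbound arccos_ubound unfolding \<beta>_def by auto
  have sn: "sin \<beta> \<ge> 0" using b0 by (intro sin_ge_zero) auto
  have sq: "(sin \<beta>)\<^sup>2 = (1 - c)/2" using cm c unfolding \<beta>_def by (simp add: sin_half_sq)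
  have "(sin \<beta>)\<^sup>2 < \<alpha>\<^sup>2" using sq c by simp
  hence sa: "sin \<beta> < \<alpha>" using sn al by (smt (verit) power_mono)
  have b6: "\<beta> < pi/6"
  proof (rule ccontr)
    assume "\<not> \<beta> < pi/6"
    hence "sin (pi/6) \<le> sin \<beta>" using b0 by (intro sin_monotone_2pi_le) auto
    thus False using sa al sin_30 by simp
  qed
  have b23: "\<beta> < 2/3" using b6 pi_less_4 by simp
  have mb: "\<bar>sin \<beta> - (\<Sum>m<3. sin_coeff m * \<beta> ^ m)\<bar> \<le> inverse (fact 3) * \<bar>\<beta>\<bar> ^ 3"
    by (rule Maclaurin_sin_bound)
  have "(\<Sum>m<3. sin_coeff m * \<beta> ^ m) = \<beta>"
    by (simp add: numeral_3_eq_3 sin_coeff_def)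
  hence "\<bar>sin \<beta> - \<beta>\<bar> * 6 \<le> \<beta> ^ 3" using mb b0 by (simp add: fact_numeral)
  hence "\<bar>sin \<beta> - \<beta>\<bar> \<le> \<beta> ^ 3 / 6" by simp
  hence "- (sin \<beta> - \<beta>) \<le> \<beta> ^ 3 / 6" by (rule abs_le_D2)
  hence "\<beta> - \<beta>^3/6 \<le> sin \<beta>" by linarith
  moreover have "\<beta>^3 \<le> \<beta> * (4/9)"
  proof -
    have "\<beta>*\<beta> \<le> (2/3)*(2/3)" using b0 b23 by (intro mult_mono) auto
    hence "\<beta>*(\<beta>*\<beta>) \<le> \<beta>*((2/3)*(2/3))" using b0 by (intro mult_left_mono) auto
    thus ?thesis by (simp add: power3_eq_cube)
  qed
  ultimately have "\<beta> * (25/27) \<le> sin \<beta>" by simp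
  hence "\<beta> * (25/27) < \<alpha>" using sa by simp
  thus ?thesis unfolding \<beta>_def by simp
qed

lemma orth_norm2:
  fixes y u :: "'a::euclidean_space"
  assumes "norm y = 1" "norm u = 1" "y \<bullet> u = 0"
  shows "(norm (A *\<^sub>R y + B *\<^sub>R u))\<^sup>2 = A\<^sup>2 + B\<^sup>2"
proof -
  have yy: "y \<bullet> y = 1" "u \<bullet> u = 1" using assms by (auto simp: norm_eq_1)
  have uy: "u \<bullet> y = 0" using assms by (simp add: inner_commute)
  show ?thesis unfolding power2_norm_eq_inner
    by (simp add: inner_add_left inner_add_right yy uy assms power2_eq_square)
qed

lemma trig_dist: "(cos (a::real) - cos b)\<^sup>2 + (sin a - sin b)\<^sup>2 \<le> (a - b)\<^sup>2"
proof -
  have "(cos a - cos b)\<^sup>2 + (sin a - sin b)\<^sup>2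
      = ((sin a)\<^sup>2 + (cos a)\<^sup>2) + ((sin b)\<^sup>2 + (cos b)\<^sup>2) - 2*(cos a * cos b + sin a * sin b)"
    by (simp add: power2_eq_square algebra_simps)
  also have "\<dots> = 2 - 2 * cos (a - b)" by (simp add: cos_diff)
  also have "\<dots> = 4 * (sin ((a-b)/2))\<^sup>2" by (simp add: sin_half_sq)
  also have "\<dots> \<le> 4 * ((a-b)/2)\<^sup>2"
  proof -
    have "\<bar>sin ((a-b)/2)\<bar>\<^sup>2 \<le> \<bar>(a-b)/2\<bar>\<^sup>2"
      by (intro power_mono abs_sin_x_le_abs_x) auto
    thus ?thesis by (simp add: power_divide)
  qed
  also have "\<dots> = (a-b)\<^sup>2" by (simp add: power2_eq_square field_simps)
  finally show ?thesis .
qed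

lemma arc_chain:
  fixes \<phi> :: "'a::euclidean_space \<Rightarrow> real" and y z x :: 'a
  assumes y: "norm y = 1" and al: "0 < \<alpha>" "\<alpha> < 1/2"
    and cone: "(1 - 2*\<alpha>\<^sup>2) * norm z < y \<bullet> z"
    and te: "\<eta> < norm z" "norm z < R" "1 < R" "0 \<le> \<eta>"
    and W: "\<And>a b. a \<notin> cball x \<eta> \<Longrightarrow> b \<notin> cball x \<eta> \<Longrightarrow> dist a b \<le> \<alpha> \<Longrightarrow> \<bar>\<phi> a - \<phi> b\<bar> \<le> W"
  shows "\<bar>\<phi> (x + z) - \<phi> (x + norm z *\<^sub>R y)\<bar> \<le> 3 * R * W"
proof -
  define t where "t = norm z"
  have t0: "t > 0" using te t_def by auto
  have outz: "x + z \<notin> cball x \<eta>" using te by (simp add: dist_norm)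
  have W0: "0 \<le> W" using W[OF outz outz] al by simp
  define c where "c = (y \<bullet> z) / t"
  have cs: "y \<bullet> z \<le> t" using norm_cauchy_schwarz[of y z] y t_def by simp
  have c1: "c \<le> 1" using cs t0 by (simp add: c_def field_simps)
  have ck: "1 - 2*\<alpha>\<^sup>2 < c" using cone t0 by (simp add: c_def t_def field_simps)
  have a2: "\<alpha>*\<alpha> < (1/2)*(1/2)" using al by (intro mult_strict_mono) auto
  have cm: "-1 \<le> c" using ck a2 by (simp add: power2_eq_square)
  define v where "v = (1/t) *\<^sub>R z"
  have zv: "z = t *\<^sub>R v" using t0 by (simp add: v_def)
  have nv: "norm v = 1" using t0 by (simp add: v_def t_def)
  have yv: "y \<bullet> v = c" by (simp add: v_def c_def)
  show ?thesis
  proof (cases "c = 1")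
    case True
    have vv: "v \<bullet> v = 1" "y \<bullet> y = 1" using nv y by (auto simp: norm_eq_1)
    have "(norm (v - y))\<^sup>2 = 0"
      unfolding power2_norm_eq_inner using vv yv True
      by (simp add: inner_diff_left inner_diff_right inner_commute)
    hence "v = y" by simp
    hence "z = norm z *\<^sub>R y" using zv t_def by simp
    hence "\<phi> (x + z) - \<phi> (x + norm z *\<^sub>R y) = 0" by simp
    thus ?thesis using W0 te by simp
  next
    case False
    hence c1': "c < 1" using c1 by simp
    define w where "w = v - c *\<^sub>R y"
    have yy: "y \<bullet> y = 1" using y by (simp add: norm_eq_1)
    have vv: "v \<bullet> v = 1" using nv by (simp add: norm_eq_1)
    have yv2: "v \<bullet> y = c" using yv by (metis inner_commute)
    have wy: "y \<bullet> w = 0" unfolding w_def inner_diff_right inner_scaleR_right yv yy by simp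
    have nw2: "(norm w)\<^sup>2 = 1 - c\<^sup>2"
    proof -
      have "w \<bullet> w = v \<bullet> v - c * (v \<bullet> y) - c * (y \<bullet> v) + c * c * (y \<bullet> y)"
        unfolding w_def by (simp add: inner_diff_left inner_diff_right algebra_simps)
      also have "\<dots> = 1 - c\<^sup>2" unfolding yv yv2 yy vv by (simp add: power2_eq_square)
      finally show ?thesis by (simp add: power2_norm_eq_inner)
    qed
    have c0: "c > 0" using ck a2 by (simp add: power2_eq_square)
    have nwpos: "norm w > 0"
    proof -
      have "c * c < 1 * 1" using c1' c0 by (intro mult_strict_mono) auto
      hence "(norm w)\<^sup>2 > 0" using nw2 by (simp add: power2_eq_square)
      thus ?thesis by (simp add: zero_less_power2)
    qed
    define u where "u = (1 / norm w) *\<^sub>R w"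
    have nu: "norm u = 1" using nwpos by (simp add: u_def)
    have yu: "y \<bullet> u = 0" by (simp add: u_def wy)
    have wu: "w = norm w *\<^sub>R u" using nwpos by (simp add: u_def)
    define \<theta> where "\<theta> = arccos c"
    have cth: "cos \<theta> = c" using cm c1 by (simp add: \<theta>_def)
    have sth: "sin \<theta> = norm w"
    proof -
      have "sin \<theta> = sqrt (1 - c\<^sup>2)" using cm c1 by (simp add: \<theta>_def sin_arccos)
      also have "\<dots> = sqrt ((norm w)\<^sup>2)" using nw2 by simp
      also have "\<dots> = norm w" by simp
      finally show ?thesis .
    qed
    have th0: "\<theta> > 0" using arccos_less_arccos[of c 1] c1' cm by (simp add: \<theta>_def)
    have thb: "\<theta> < 54/25 * \<alpha>" using theta_bound[OF al ck c1] by (simp add: \<theta>_def)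
    define p where "p = (\<lambda>a. x + t *\<^sub>R (cos a *\<^sub>R y + sin a *\<^sub>R u))"
    have p0: "p 0 = x + norm z *\<^sub>R y" by (simp add: p_def t_def)
    have pth: "p \<theta> = x + z"
    proof -
      have "cos \<theta> *\<^sub>R y + sin \<theta> *\<^sub>R u = v" using cth sth wu by (simp add: w_def)
      thus ?thesis using zv by (simp add: p_def)
    qed
    have pout: "p a \<notin> cball x \<eta>" for a
    proof -
      have "(norm (cos a *\<^sub>R y + sin a *\<^sub>R u))\<^sup>2 = 1" using orth_norm2[OF y nu yu] by simp
      hence "norm (cos a *\<^sub>R y + sin a *\<^sub>R u) = 1" using norm_ge_zero[of "cos a *\<^sub>R y + sin a *\<^sub>R u"] by (auto simp add: power2_eq_1_iff)
      hence "dist x (p a) = t" using t0 by (simp add: p_def dist_norm)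
      thus ?thesis using te t_def by simp
    qed
    have pdist: "dist (p a) (p b) \<le> t * \<bar>a - b\<bar>" for a b
    proof -
      have "p a - p b = (t * (cos a - cos b)) *\<^sub>R y + (t * (sin a - sin b)) *\<^sub>R u"
        by (simp add: p_def algebra_simps)
      hence "(dist (p a) (p b))\<^sup>2 = (t * (cos a - cos b))\<^sup>2 + (t * (sin a - sin b))\<^sup>2"
        using orth_norm2[OF y nu yu] by (simp add: dist_norm)
      also have "\<dots> = t\<^sup>2 * ((cos a - cos b)\<^sup>2 + (sin a - sin b)\<^sup>2)" by algebra
      also have "\<dots> \<le> t\<^sup>2 * (a - b)\<^sup>2" by (intro mult_left_mono trig_dist) auto
      also have "\<dots> = (t * \<bar>a - b\<bar>)\<^sup>2" by (simp add: power_mult_distrib)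
      finally show ?thesis by (rule power2_le_imp_le) (use t0 in auto)
    qed
    define q where "q = t * \<theta> / \<alpha>"
    have q0: "q > 0" using t0 th0 al by (simp add: q_def)
    have qb: "q < 54/25 * R"
    proof -
      have "t * \<theta> < t * (54/25 * \<alpha>)" using t0 thb by simp
      hence "q < 54/25 * t" using al by (simp add: q_def field_simps)
      thus ?thesis using te t_def by simp
    qed
    define n where "n = nat \<lceil>q\<rceil>"
    have nq: "real n = of_int \<lceil>q\<rceil>" using q0 by (simp add: n_def)
    have qn: "q \<le> real n" using nq by simp
    have n0: "n > 0" using qn q0 by simp
    have n3: "real n \<le> 3 * R"
    proof (cases "R \<ge> 4/3")
      case True
      have "of_int \<lceil>q\<rceil> < q + 1" by linarith
      thus ?thesis using nq qb True by simp
    next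
      case False
      hence "q \<le> 3" using qb by simp
      hence "\<lceil>q\<rceil> \<le> 3" by (simp add: ceiling_le_iff)
      hence "real n \<le> 3" using nq by simp
      thus ?thesis using te by simp
    qed
    define f where "f = (\<lambda>i::nat. \<phi> (p (real i * \<theta> / real n)))"
    have fn: "f n = \<phi> (x + z)" using n0 pth by (simp add: f_def)
    have f0: "f 0 = \<phi> (x + norm z *\<^sub>R y)" using p0 by (simp add: f_def)
    have step: "\<bar>f (Suc i) - f i\<bar> \<le> W" for i
    proof -
      have "dist (p (real (Suc i) * \<theta> / real n)) (p (real i * \<theta> / real n))
          \<le> t * \<bar>real (Suc i) * \<theta> / real n - real i * \<theta> / real n\<bar>" by (rule pdist)
      also have "\<dots> = t * \<theta> / real n" using th0 n0 by (simp add: field_simps)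
      also have "\<dots> \<le> \<alpha>"
        using qn n0 al unfolding q_def by (simp add: field_simps)
      finally show ?thesis unfolding f_def by (intro W pout)
    qed
    have "\<phi> (x + z) - \<phi> (x + norm z *\<^sub>R y) = (\<Sum>i<n. f (Suc i) - f i)"
      by (simp add: sum_lessThan_telescope fn f0)
    hence "\<bar>\<phi> (x + z) - \<phi> (x + norm z *\<^sub>R y)\<bar> \<le> (\<Sum>i<n. \<bar>f (Suc i) - f i\<bar>)"
      by (simp add: sum_abs)
    also have "\<dots> \<le> (\<Sum>i<n. W)" by (intro sum_mono step)
    also have "\<dots> = real n * W" by simp
    also have "\<dots> \<le> 3 * R * W" using n3 W0 by (intro mult_right_mono) auto
    finally show ?thesis .
  qed
qed

lemma mvt_cball:
  fixes \<phi> :: "'a::euclidean_space \<Rightarrow> real" and G :: "'a \<Rightarrow> 'a" and H :: "'a \<Rightarrow> ('a \<Rightarrow>\<^sub>L 'a)"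
  assumes eta: "\<eta> > 0"
    and D1: "\<forall>z\<in>cball x \<eta>. (\<phi> has_derivative (\<lambda>h. G z \<bullet> h)) (at z within cball x \<eta>)"
    and D1c: "continuous_on (cball x \<eta>) G"
    and D2: "\<forall>z\<in>cball x \<eta>. (G has_derivative blinfun_apply (H z)) (at z within cball x \<eta>)"
    and D2c: "continuous_on (cball x \<eta>) H"
    and a: "a \<in> cball x \<eta>" and b: "b \<in> cball x \<eta>"
  shows "\<bar>\<phi> a - \<phi> b\<bar> \<le> (norm (G x) + (SUP z\<in>ball x \<eta>. norm (H z)) * \<eta>) * norm (a - b)"
proof -
  define B where "B = (SUP z\<in>ball x \<eta>. norm (H z))"
  have "compact (H ` cball x \<eta>)" by (intro compact_continuous_image D2c) auto
  hence "bounded (H ` cball x \<eta>)" by (rule compact_imp_bounded)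
  then obtain M where M0: "\<forall>y\<in>H ` cball x \<eta>. norm y \<le> M" unfolding bounded_iff by blast
  hence M: "\<And>z. z \<in> cball x \<eta> \<Longrightarrow> norm (H z) \<le> M" by blast
  have bdd: "bdd_above ((\<lambda>z. norm (H z)) ` ball x \<eta>)"
    using M by (intro bdd_aboveI2[where M=M]) auto
  have HB: "norm (H z) \<le> B" if "z \<in> ball x \<eta>" for z
    unfolding B_def using bdd that by (rule cSUP_upper2) auto
  have xb: "x \<in> ball x \<eta>" using eta by simp
  have B0: "0 \<le> B" using HB[OF xb] norm_ge_zero[of "H x"] by linarith
  have Gb: "norm (G w) \<le> norm (G x) + B * \<eta>" if w: "w \<in> ball x \<eta>" for w
  proof -
    have "norm (G w - G x) \<le> B * norm (w - x)"
    proof (rule differentiable_bound[where S="ball x \<eta>" and f'="\<lambda>z. blinfun_apply (H z)"])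
      show "convex (ball x \<eta>)" by simp
      show "(G has_derivative blinfun_apply (H z)) (at z within ball x \<eta>)" if "z \<in> ball x \<eta>" for z
      proof -
        have d: "(G has_derivative blinfun_apply (H z)) (at z within cball x \<eta>)" using D2 that by auto
        show ?thesis by (rule has_derivative_subset[OF d]) auto
      qed
      show "onorm (blinfun_apply (H z)) \<le> B" if "z \<in> ball x \<eta>" for z
        using HB[OF that] by (simp add: norm_blinfun.rep_eq)
    qed (use w xb in auto)
    also have "\<dots> \<le> B * \<eta>" using w B0 by (intro mult_left_mono) (auto simp: dist_norm norm_minus_commute)
    finally show ?thesis using norm_triangle_ineq2[of "G w" "G x"] by linarith
  qed
  have Gc: "norm (G w) \<le> norm (G x) + B * \<eta>" if w: "w \<in> cball x \<eta>" for w
  proof -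
    have 1: "continuous_on (closure (ball x \<eta>)) G" using D1c eta by simp
    have 2: "\<forall>y\<in>ball x \<eta>. norm (G y) \<le> norm (G x) + B * \<eta>" using Gb by blast
    have 3: "w \<in> closure (ball x \<eta>)" using w eta by simp
    show ?thesis using continuous_on_closure_norm_le[OF 1 2 3] .
  qed
  have "norm (\<phi> a - \<phi> b) \<le> (norm (G x) + B * \<eta>) * norm (a - b)"
  proof (rule differentiable_bound[where S="cball x \<eta>" and f'="\<lambda>z h. G z \<bullet> h"])
    show "convex (cball x \<eta>)" by simp
    show "(\<phi> has_derivative (\<lambda>h. G z \<bullet> h)) (at z within cball x \<eta>)" if "z \<in> cball x \<eta>" for z
      using D1 that by auto
    show "onorm (\<lambda>h. G z \<bullet> h) \<le> norm (G x) + B * \<eta>" if "z \<in> cball x \<eta>" for z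
    proof (rule onorm_bound)
      show "0 \<le> norm (G x) + B * \<eta>" using B0 eta by simp
      show "norm (G z \<bullet> h) \<le> (norm (G x) + B * \<eta>) * norm h" for h
      proof -
        have "norm (G z \<bullet> h) \<le> norm (G z) * norm h" using Cauchy_Schwarz_ineq2 by simp
        also have "\<dots> \<le> (norm (G x) + B * \<eta>) * norm h" using Gc[OF that] by (intro mult_right_mono) auto
        finally show ?thesis .
      qed
    qed
  qed (use a b in auto)
  thus ?thesis by (simp add: B_def)
qed

lemma supH_nonneg:
  fixes H :: "'a::euclidean_space \<Rightarrow> ('a \<Rightarrow>\<^sub>L 'a)"
  assumes eta: "\<eta> > 0" and D2c: "continuous_on (cball x \<eta>) H"
  shows "0 \<le> (SUP z\<in>ball x \<eta>. norm (H z))"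
proof -
  have "compact (H ` cball x \<eta>)" by (intro compact_continuous_image D2c) auto
  hence "bounded (H ` cball x \<eta>)" by (rule compact_imp_bounded)
  then obtain M where M0: "\<forall>y\<in>H ` cball x \<eta>. norm y \<le> M" unfolding bounded_iff by blast
  hence M: "\<And>z. z \<in> cball x \<eta> \<Longrightarrow> norm (H z) \<le> M" by blast
  have bdd: "bdd_above ((\<lambda>z. norm (H z)) ` ball x \<eta>)"
    using M by (intro bdd_aboveI2[where M=M]) auto
  have xb: "x \<in> ball x \<eta>" using eta by simp
  have "norm (H x) \<le> (SUP z\<in>ball x \<eta>. norm (H z))"
    using bdd xb by (rule cSUP_upper2) auto
  thus ?thesis using norm_ge_zero[of "H x"] by linarith
qed

lemma modulus_le:
  fixes \<phi> :: "'a::euclidean_space \<Rightarrow> real"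
  assumes bnd: "bounded (range \<phi>)"
    and a: "a \<notin> cball x \<eta>" and b: "b \<notin> cball x \<eta>" and d: "dist a b \<le> \<alpha>"
  shows "\<bar>\<phi> a - \<phi> b\<bar> \<le> modulus_out \<phi> x \<eta> \<alpha>"
proof -
  obtain M where M0: "\<forall>y\<in>range \<phi>. norm y \<le> M" using bnd unfolding bounded_iff by blast
  hence M: "\<And>z. \<bar>\<phi> z\<bar> \<le> M" by auto
  define S where "S = {(z, w). z \<notin> cball x \<eta> \<and> w \<notin> cball x \<eta> \<and> dist z w \<le> \<alpha>}"
  have bdd: "bdd_above ((\<lambda>(z, w). \<bar>\<phi> z - \<phi> w\<bar>) ` S)"
  proof (rule bdd_aboveI2[where M="2*M"])
    fix p assume "p \<in> S"
    obtain z w where p: "p = (z, w)" by fastforce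
    have "\<bar>\<phi> z - \<phi> w\<bar> \<le> 2*M" using M[of z] M[of w] by linarith
    thus "(case p of (z, w) \<Rightarrow> \<bar>\<phi> z - \<phi> w\<bar>) \<le> 2*M" using p by simp
  qed
  have "(a, b) \<in> S" using a b d by (simp add: S_def)
  hence "(\<lambda>(z, w). \<bar>\<phi> z - \<phi> w\<bar>) (a, b) \<le> (SUP p\<in>S. (\<lambda>(z, w). \<bar>\<phi> z - \<phi> w\<bar>) p)"
    using bdd by (intro cSUP_upper) auto
  thus ?thesis unfolding modulus_out_def S_def by simp
qed

lemma pointwise:
  fixes \<phi> :: "'a::euclidean_space \<Rightarrow> real"
    and x y z :: 'a and \<eta> \<epsilon> R \<alpha> :: real
    and G :: "'a \<Rightarrow> 'a" and H :: "'a \<Rightarrow> ('a \<Rightarrow>\<^sub>L 'a)"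
  assumes eta: "\<eta> > 0"
    and bnd: "bounded (range \<phi>)"
    and D1: "\<forall>z\<in>cball x \<eta>. (\<phi> has_derivative (\<lambda>h. G z \<bullet> h)) (at z within cball x \<eta>)"
    and D1c: "continuous_on (cball x \<eta>) G"
    and D2: "\<forall>z\<in>cball x \<eta>. (G has_derivative blinfun_apply (H z)) (at z within cball x \<eta>)"
    and D2c: "continuous_on (cball x \<eta>) H"
    and R: "R > max \<eta> 1"
    and alpha: "0 < \<alpha>" "\<alpha> < 1/2"
    and y: "norm y = 1"
    and cone: "(1 - 2*\<alpha>\<^sup>2) * norm z < y \<bullet> z" and zR: "norm z < R"
  shows "\<bar>\<phi> (x + z) - \<phi> (x + norm z *\<^sub>R y)\<bar>
     \<le> max (2 * (norm (G x) + 2 * ((1/2) * (SUP z\<in>ball x \<eta>. norm (H z))) * \<eta>) * \<eta> * \<alpha>)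
             (3 * R * modulus_out \<phi> x \<eta> \<alpha>)"
proof (cases "norm z \<le> \<eta>")
  case True
  define B where "B = (SUP z\<in>ball x \<eta>. norm (H z))"
  have B0: "0 \<le> B" unfolding B_def by (rule supH_nonneg[OF eta D2c])
  have a: "x + z \<in> cball x \<eta>" using True by (simp add: dist_norm)
  have b: "x + norm z *\<^sub>R y \<in> cball x \<eta>" using True y by (simp add: dist_norm)
  have dz: "norm (z - norm z *\<^sub>R y) \<le> 2 * \<alpha> * norm z"
  proof -
    have yy: "y \<bullet> y = 1" using y by (simp add: norm_eq_1)
    have zz: "z \<bullet> z = norm z * norm z" using dot_square_norm[of z] by (simp add: power2_eq_square)
    have "(norm (z - norm z *\<^sub>R y))\<^sup>2 = z \<bullet> z - 2 * norm z * (y \<bullet> z) + (norm z)\<^sup>2 * (y \<bullet> y)"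
      unfolding power2_norm_eq_inner using zz by (simp add: inner_diff_left inner_diff_right inner_commute power2_eq_square algebra_simps)
    also have "\<dots> = 2 * norm z * (norm z - y \<bullet> z)" using yy zz by (simp add: power2_eq_square algebra_simps)
    also have "\<dots> \<le> 2 * norm z * (2 * \<alpha>\<^sup>2 * norm z)"
      using cone by (intro mult_left_mono) (auto simp: algebra_simps)
    also have "\<dots> = (2 * \<alpha> * norm z)\<^sup>2" by (simp add: power2_eq_square)
    finally show ?thesis by (rule power2_le_imp_le) (use alpha in auto)
  qed
  have "\<bar>\<phi> (x + z) - \<phi> (x + norm z *\<^sub>R y)\<bar> \<le> (norm (G x) + B * \<eta>) * norm ((x + z) - (x + norm z *\<^sub>R y))"
    unfolding B_def by (rule mvt_cball[OF eta D1 D1c D2 D2c a b])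
  also have "\<dots> \<le> (norm (G x) + B * \<eta>) * (2 * \<alpha> * \<eta>)"
  proof (intro mult_left_mono)
    show "norm ((x + z) - (x + norm z *\<^sub>R y)) \<le> 2 * \<alpha> * \<eta>"
      using dz True alpha by (simp, smt (verit) mult_left_mono)
    show "0 \<le> norm (G x) + B * \<eta>" using B0 eta by simp
  qed
  also have "\<dots> = 2 * (norm (G x) + 2 * ((1/2) * B) * \<eta>) * \<eta> * \<alpha>" by (simp add: algebra_simps)
  finally show ?thesis unfolding B_def by simp
next
  case False
  have W: "\<bar>\<phi> a - \<phi> b\<bar> \<le> modulus_out \<phi> x \<eta> \<alpha>"
    if "a \<notin> cball x \<eta>" "b \<notin> cball x \<eta>" "dist a b \<le> \<alpha>" for a b
    using modulus_le[OF bnd that] .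
  have "\<bar>\<phi> (x + z) - \<phi> (x + norm z *\<^sub>R y)\<bar> \<le> 3 * R * modulus_out \<phi> x \<eta> \<alpha>"
    by (rule arc_chain[OF y alpha cone _ zR _ _ W]) (use False R eta in auto)
  thus ?thesis by simp
qed

lemma cone_borel: "{z::'a::euclidean_space. k * norm z < y \<bullet> z} \<in> sets borel"
  by measurable

lemma cone_scale:
  fixes y :: "'a::euclidean_space"
  assumes r: "r > 0"
  shows "emeasure lborel ({z. k * norm z < y \<bullet> z} \<inter> cball 0 r)
       = ennreal (r ^ DIM('a)) * emeasure lborel ({z. k * norm z < y \<bullet> z} \<inter> cball 0 1)"
proof -
  define C where "C = {z::'a. k * norm z < y \<bullet> z}"
  have Cb: "C \<in> sets borel" unfolding C_def by (rule cone_borel)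
  have eq: "(lborel::'a measure) = density (distr lborel borel (\<lambda>x. 0 + r *\<^sub>R x)) (\<lambda>_. \<bar>r\<bar>^DIM('a))"
    using r by (intro lborel_affine) auto
  have ar: "\<bar>r\<bar> = r" using r by simp
  have pre: "(\<lambda>x. 0 + r *\<^sub>R x) -` (C \<inter> cball 0 r) = C \<inter> cball 0 1"
  proof -
    have h1: "(k * (\<bar>r\<bar> * norm x) < r * (y \<bullet> x)) \<longleftrightarrow> (k * norm x < y \<bullet> x)" for x
      using r by (simp add: ar mult.left_commute[of k r])
    have h2: "(\<bar>r\<bar> * norm x \<le> r) \<longleftrightarrow> norm x \<le> 1" for x
      using r by (simp add: ar mult_le_cancel_left1)
    show ?thesis by (auto simp: C_def h1 h2)
  qed
  have "emeasure (lborel::'a measure) (C \<inter> cball 0 r)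
      = emeasure (density (distr lborel borel (\<lambda>x. 0 + r *\<^sub>R x)) (\<lambda>_. \<bar>r\<bar>^DIM('a))) (C \<inter> cball 0 r)"
    by (subst eq) (rule refl)
  also have "\<dots> = \<bar>r\<bar>^DIM('a) * emeasure (distr lborel borel (\<lambda>x. 0 + r *\<^sub>R x)) (C \<inter> cball 0 r)"
    using Cb by (intro emeasure_density_const) auto
  also have "emeasure (distr lborel borel (\<lambda>x. 0 + r *\<^sub>R x)) (C \<inter> cball 0 r)
       = emeasure lborel ((\<lambda>x. 0 + r *\<^sub>R x) -` (C \<inter> cball 0 r) \<inter> space lborel)"
    using Cb by (intro emeasure_distr) auto
  also have "\<dots> = emeasure lborel (C \<inter> cball 0 1)" using pre by simp
  finally show ?thesis using r unfolding C_def by (simp add: ennreal_power)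
qed

lemma cone_facts:
  fixes y :: "'a::euclidean_space"
  assumes y: "norm y = 1" and k: "0 < k" "k < 1"
  defines "C \<equiv> {z::'a. k * norm z < y \<bullet> z}"
  defines "c \<equiv> measure lborel (C \<inter> cball 0 1)"
  shows "c > 0"
    and "\<And>r. r \<ge> 0 \<Longrightarrow> emeasure lborel (C \<inter> cball 0 r) = ennreal (c * r ^ DIM('a))"
    and "\<And>r. r \<ge> 0 \<Longrightarrow> emeasure lborel (C \<inter> ball 0 r) = ennreal (c * r ^ DIM('a))"
proof -
  have Cb: "C \<in> sets borel" unfolding C_def by (rule cone_borel)
  have fin1: "emeasure lborel (C \<inter> cball 0 1) < \<infinity>"
    by (rule le_less_trans[OF emeasure_mono emeasure_lborel_cball_finite]) auto
  hence e1: "emeasure lborel (C \<inter> cball 0 1) = ennreal c"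
    unfolding c_def by (simp add: emeasure_eq_ennreal_measure less_top)
  have c0: "0 \<le> c" unfolding c_def by simp
  show mC: "emeasure lborel (C \<inter> cball 0 r) = ennreal (c * r ^ DIM('a))" if r: "r \<ge> 0" for r
  proof (cases "r = 0")
    case True
    have "C \<inter> cball 0 r = {}" using True by (auto simp: C_def)
    thus ?thesis using True DIM_positive[where 'a='a] by (simp add: power_0_left)
  next
    case False
    hence "r > 0" using r by simp
    hence "emeasure lborel (C \<inter> cball 0 r) = ennreal (r ^ DIM('a)) * ennreal c"
      using cone_scale[of r k y] e1 unfolding C_def by simp
    thus ?thesis using c0 r by (simp add: ennreal_mult' mult.commute)
  qed
  show "emeasure lborel (C \<inter> ball 0 r) = ennreal (c * r ^ DIM('a))" if r: "r \<ge> 0" for r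
  proof -
    have "emeasure lborel (cball (0::'a) r - ball 0 r) = emeasure lborel (cball (0::'a) r) - emeasure lborel (ball (0::'a) r)"
      by (intro emeasure_Diff) (auto simp: emeasure_ball[OF r])
    also have "\<dots> = 0" by (simp add: emeasure_ball[OF r] emeasure_cball[OF r])
    finally have "cball (0::'a) r - ball 0 r \<in> null_sets lborel" by auto
    hence nul: "C \<inter> (cball 0 r - ball 0 r) \<in> null_sets lborel"
      by (rule null_sets_subset) (use Cb in auto)
    have "C \<inter> cball 0 r = (C \<inter> ball 0 r) \<union> (C \<inter> (cball 0 r - ball 0 r))" by auto
    hence "emeasure lborel (C \<inter> cball 0 r) = emeasure lborel (C \<inter> ball 0 r)"
      using emeasure_Un_null_set[OF _ nul, of "C \<inter> ball 0 r"] Cb by auto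
    thus ?thesis using mC[OF r] by simp
  qed
  show "c > 0"
  proof -
    define \<delta> where "\<delta> = (1 - k) / 8"
    have d0: "\<delta> > 0" using k by (simp add: \<delta>_def)
    have sub: "ball ((1/2) *\<^sub>R y) \<delta> \<subseteq> C \<inter> cball 0 1"
    proof
      fix z assume "z \<in> ball ((1/2) *\<^sub>R y) \<delta>"
      hence zd: "norm (z - (1/2) *\<^sub>R y) < \<delta>" by (simp add: dist_norm norm_minus_commute)
      have yy: "y \<bullet> y = 1" using y by (simp add: norm_eq_1)
      have "y \<bullet> z = 1/2 + y \<bullet> (z - (1/2) *\<^sub>R y)" by (simp add: inner_diff_right yy)
      moreover have "\<bar>y \<bullet> (z - (1/2) *\<^sub>R y)\<bar> \<le> norm (z - (1/2) *\<^sub>R y)"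
        using Cauchy_Schwarz_ineq2[of y "z - (1/2) *\<^sub>R y"] y by simp
      ultimately have yz: "y \<bullet> z \<ge> 1/2 - \<delta>" using zd by linarith
      have "norm z \<le> norm ((1/2) *\<^sub>R y) + norm (z - (1/2) *\<^sub>R y)"
        using norm_triangle_ineq[of "(1/2) *\<^sub>R y" "z - (1/2) *\<^sub>R y"] by simp
      hence nz: "norm z \<le> 1/2 + \<delta>" using zd y by simp
      have "k * norm z \<le> k * (1/2 + \<delta>)" using nz k by (intro mult_left_mono) auto
      also have "\<dots> < 1/2 - \<delta>"
      proof -
        have "0 < (1-k)*(3-k)" using k by (intro mult_pos_pos) auto
        hence "0 < 3 - 4*k + k*k" by (simp add: algebra_simps)
        thus ?thesis unfolding \<delta>_def by (simp add: field_simps)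
      qed
      finally have "k * norm z < y \<bullet> z" using yz by linarith
      moreover have "norm z \<le> 1" using nz k unfolding \<delta>_def by argo
      ultimately show "z \<in> C \<inter> cball 0 1" by (simp add: C_def)
    qed
    have "0 < emeasure lborel (ball ((1/2) *\<^sub>R y) \<delta>)"
      using d0 by (simp add: emeasure_ball)
    also have "\<dots> \<le> emeasure lborel (C \<inter> cball 0 1)" using sub Cb by (intro emeasure_mono) auto
    finally show ?thesis using e1 by simp
  qed
qed

lemma radial_distr:
  fixes y :: "'a::euclidean_space"
  assumes y: "norm y = 1" and k: "0 < k" "k < 1" and e: "0 < \<epsilon>" "\<epsilon> < R"
  defines "C \<equiv> {z::'a. k * norm z < y \<bullet> z}"
  defines "c \<equiv> measure lborel (C \<inter> cball 0 1)"
  defines "T \<equiv> C \<inter> {z. \<epsilon> < norm z \<and> norm z < R}"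
  shows "distr (density lborel (indicator T)) borel norm
       = density lborel (\<lambda>t. ennreal (indicator {\<epsilon><..<R} t * (c * real DIM('a) * t ^ (DIM('a) - 1))))"
    (is "?D = ?D'")
proof -
  let ?N = "DIM('a)"
  have Cb: "C \<in> sets borel" unfolding C_def by (rule cone_borel)
  have Tb: "T \<in> sets borel" unfolding T_def using Cb by measurable
  note cf = cone_facts[OF y k, folded C_def, folded c_def]
  have c0: "c > 0" by (rule cf(1))
  define F where "F = (\<lambda>r. if max \<epsilon> r < R then c * (R ^ ?N - (max \<epsilon> r) ^ ?N) else 0)"
  have LHS: "emeasure ?D {r<..} = ennreal (F r)" for r
  proof -
    have "emeasure ?D {r<..} = emeasure (density lborel (indicator T)) (norm -` {r<..} \<inter> space (density lborel (indicator T)))"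
      by (rule emeasure_distr) auto
    also have "\<dots> = emeasure lborel (T \<inter> (norm -` {r<..}))"
    proof -
      have "{z::'a. r < norm z} \<in> sets borel" by measurable
      hence pb: "(norm -` {r<..} :: 'a set) \<in> sets lborel" by (simp add: vimage_def)
      have Tl: "T \<in> sets lborel" using Tb by simp
      show ?thesis using emeasure_restricted[OF Tl pb] by simp
    qed
    also have "\<dots> = ennreal (F r)"
    proof (cases "max \<epsilon> r < R")
      case True
      define m where "m = max \<epsilon> r"
      have m0: "m \<ge> 0" "m < R" using e True by (auto simp: m_def)
      have Fr: "F r = c * (R ^ ?N - m ^ ?N)"
        unfolding F_def m_def[symmetric] by (rule if_P) (use m0 in simp)
      have "T \<inter> (norm -` {r<..}) = (C \<inter> ball 0 R) - (C \<inter> cball 0 m)"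
        by (auto simp: T_def m_def)
      moreover have "emeasure lborel (C \<inter> ball 0 R - C \<inter> cball 0 m) = emeasure lborel (C \<inter> ball 0 R) - emeasure lborel (C \<inter> cball 0 m)"
      proof (rule emeasure_Diff)
        show "emeasure lborel (C \<inter> cball 0 m) \<noteq> \<infinity>" using cf(2)[of m] m0 by simp
        show "C \<inter> ball 0 R \<in> sets lborel" using Cb by simp
        show "C \<inter> cball 0 m \<in> sets lborel" using Cb by simp
        show "C \<inter> cball 0 m \<subseteq> C \<inter> ball 0 R" using m0 by auto
      qed
      ultimately have "emeasure lborel (T \<inter> (norm -` {r<..})) = emeasure lborel (C \<inter> ball 0 R) - emeasure lborel (C \<inter> cball 0 m)"
        by simp
      also have "\<dots> = ennreal (c * R ^ ?N) - ennreal (c * m ^ ?N)"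
        using cf(2)[of m] cf(3)[of R] m0 by simp
      also have "\<dots> = ennreal (c * R ^ ?N - c * m ^ ?N)"
        using c0 m0 by (intro ennreal_minus) auto
      also have "c * R ^ ?N - c * m ^ ?N = F r" using Fr by (simp add: algebra_simps)
      finally show ?thesis .
    next
      case False
      have "T \<inter> (norm -` {r<..}) = {}" using False by (auto simp: T_def)
      moreover have "F r = 0" unfolding F_def by (rule if_not_P) (use False in simp)
      ultimately show ?thesis by simp
    qed
    finally show ?thesis .
  qed
  have RHS: "emeasure ?D' {r<..} = ennreal (F r)" for r
  proof -
    have "emeasure ?D' {r<..} = (\<integral>\<^sup>+ t. ennreal (indicator {\<epsilon><..<R} t * (c * real ?N * t ^ (?N - 1))) * indicator {r<..} t \<partial>lborel)"
      by (rule emeasure_density) auto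
    also have "\<dots> = ennreal (F r)"
    proof (cases "max \<epsilon> r < R")
      case True
      define m where "m = max \<epsilon> r"
      have m0: "m > 0" "m < R" using e True by (auto simp: m_def)
      have "(\<integral>\<^sup>+ t. ennreal (indicator {\<epsilon><..<R} t * (c * real ?N * t ^ (?N - 1))) * indicator {r<..} t \<partial>lborel)
          = (\<integral>\<^sup>+ t. ennreal (c * real ?N * t ^ (?N - 1)) * indicator {m..R} t \<partial>lborel)"
      proof (rule nn_integral_cong_AE)
        show "AE t in lborel. ennreal (indicator {\<epsilon><..<R} t * (c * real ?N * t ^ (?N - 1))) * indicator {r<..} t
              = ennreal (c * real ?N * t ^ (?N - 1)) * indicator {m..R} t"
          using AE_lborel_singleton[of m] AE_lborel_singleton[of R]
          by eventually_elim (auto simp: m_def split: split_indicator)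
      qed
      also have "\<dots> = ennreal ((\<lambda>t. c * t ^ ?N) R - (\<lambda>t. c * t ^ ?N) m)"
      proof (rule nn_integral_FTC_Icc)
        show "(\<lambda>t. c * real ?N * t ^ (?N - 1)) \<in> borel_measurable borel" by measurable
        show "((\<lambda>t. c * t ^ ?N) has_real_derivative c * real ?N * t ^ (?N - 1)) (at t)" for t
          by (auto intro!: derivative_eq_intros)
        show "0 \<le> c * real ?N * t ^ (?N - 1)" if "t \<in> {m..R}" for t
          using that m0 c0 by auto
        show "m \<le> R" using m0 by simp
      qed
      also have "\<dots> = ennreal (F r)"
      proof -
        have "F r = c * (R ^ ?N - m ^ ?N)"
          unfolding F_def m_def[symmetric] by (rule if_P) (use m0 in simp)
        hence "c * R ^ ?N - c * m ^ ?N = F r" by (simp add: algebra_simps)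
        thus ?thesis by simp
      qed
      finally show ?thesis .
    next
      case False
      have "(\<integral>\<^sup>+ t. ennreal (indicator {\<epsilon><..<R} t * (c * real ?N * t ^ (?N - 1))) * indicator {r<..} t \<partial>lborel)
          = (\<integral>\<^sup>+ (t::real). 0 \<partial>lborel)"
        by (rule nn_integral_cong) (use False in \<open>auto split: split_indicator\<close>)
      moreover have "F r = 0" unfolding F_def by (rule if_not_P) (use False in simp)
      ultimately show ?thesis by simp
    qed
    finally show ?thesis .
  qed
  show ?thesis
  proof (rule measure_eqI_lessThan)
    show "sets ?D = sets borel" by simp
    show "sets ?D' = sets borel" by simp
    show "emeasure ?D {r<..} < \<infinity>" for r using LHS by simp
    show "emeasure ?D {r<..} = emeasure ?D' {r<..}" for r using LHS RHS by simp
  qed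
qed

lemma radial_integral:
  fixes y :: "'a::euclidean_space" and h :: "real \<Rightarrow> real"
  assumes y: "norm y = 1" and k: "0 < k" "k < 1" and e: "0 < \<epsilon>" "\<epsilon> < R"
    and hm[measurable]: "h \<in> borel_measurable borel"
  defines "C \<equiv> {z::'a. k * norm z < y \<bullet> z}"
  defines "c \<equiv> measure lborel (C \<inter> cball 0 1)"
  defines "T \<equiv> C \<inter> {z. \<epsilon> < norm z \<and> norm z < R}"
  shows "(\<integral>z. indicator T z * h (norm z) \<partial>lborel)
       = (\<integral>t. indicator {\<epsilon><..<R} t * (c * real DIM('a) * t ^ (DIM('a) - 1)) * h t \<partial>lborel)"
proof -
  have Cb: "C \<in> sets borel" unfolding C_def by (rule cone_borel)
  have Tb[measurable]: "T \<in> sets borel" unfolding T_def using Cb by measurable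
  have c0: "c > 0" using cone_facts(1)[OF y k] unfolding c_def C_def .
  have "(\<integral>z. indicator T z * h (norm z) \<partial>lborel)
      = integral\<^sup>L (density lborel (\<lambda>z. ennreal (indicator T z))) (\<lambda>z. h (norm z))"
    by (subst integral_density) auto
  also have "density lborel (\<lambda>z. ennreal (indicator T z)) = density lborel (indicator T)"
    by (simp add: ennreal_indicator)
  also have "integral\<^sup>L (density lborel (indicator T)) (\<lambda>z. h (norm z))
      = integral\<^sup>L (distr (density lborel (indicator T)) borel norm) h"
    by (subst integral_distr) auto
  also have "distr (density lborel (indicator T)) borel norm
       = density lborel (\<lambda>t. ennreal (indicator {\<epsilon><..<R} t * (c * real DIM('a) * t ^ (DIM('a) - 1))))"
    unfolding T_def C_def c_def by (rule radial_distr[OF y k e])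
  also have "integral\<^sup>L \<dots> h = (\<integral>t. indicator {\<epsilon><..<R} t * (c * real DIM('a) * t ^ (DIM('a) - 1)) * h t \<partial>lborel)"
    using c0 e by (subst integral_density) (auto split: split_indicator intro!: AE_I2)
  finally show ?thesis .
qed

lemma Cs_pos: "0 < s \<Longrightarrow> s < 1 \<Longrightarrow> Cs s > 0"
  unfolding Cs_def by (intro divide_pos_pos mult_pos_pos) auto

lemma CNs_pos: "0 < s \<Longrightarrow> s < 1 \<Longrightarrow> CNs N s > 0"
  unfolding CNs_def by (intro divide_pos_pos mult_pos_pos) (auto intro!: Gamma_real_pos add_nonneg_pos)

lemma nu_atLeast:
  assumes s: "0 < s" "s < 1" and a: "a > 0"
  shows "emeasure (mu_s s) {a..} = ennreal (Cs s * a powr (- (2 * s)) / (2 * s))"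
proof -
  have "emeasure (mu_s s) {a..} = (\<integral>\<^sup>+ t. ennreal (if t > 0 then Cs s * t powr (- 1 - 2 * s) else 0) * indicator {a..} t \<partial>lborel)"
    unfolding mu_s_def by (rule emeasure_density) auto
  also have "\<dots> = (\<integral>\<^sup>+ t. ennreal (Cs s * t powr (- 1 - 2 * s)) * indicator {a..} t \<partial>lborel)"
    using a by (intro nn_integral_cong) (auto split: split_indicator)
  also have "\<dots> = ennreal (0 - (\<lambda>t. (- Cs s / (2 * s)) * t powr (- (2 * s))) a)"
  proof (rule nn_integral_FTC_atLeast)
    show "(\<lambda>t. Cs s * t powr (- 1 - 2 * s)) \<in> borel_measurable borel" by measurable
    show "((\<lambda>t. (- Cs s / (2 * s)) * t powr (- (2 * s))) has_real_derivative Cs s * x powr (- 1 - 2 * s)) (at x)" if "a \<le> x" for x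
    proof -
      have x0: "x > 0" using a that by simp
      have "((\<lambda>t. (- Cs s / (2 * s)) * t powr (- (2 * s))) has_real_derivative (- Cs s / (2 * s)) * ((- (2 * s)) * x powr (- (2 * s) - 1))) (at x)"
        by (intro DERIV_cmult has_real_derivative_powr x0)
      moreover have "- (2 * s) - 1 = - 1 - 2 * s" by simp
      moreover have "(- Cs s / (2 * s)) * ((- (2 * s)) * x powr (- 1 - 2 * s)) = Cs s * x powr (- 1 - 2 * s)"
        using s by (simp add: field_simps)
      ultimately show ?thesis by simp
    qed
    show "0 \<le> Cs s * x powr (- 1 - 2 * s)" if "a \<le> x" for x
      using Cs_pos[OF s] by simp
    show "((\<lambda>t. (- Cs s / (2 * s)) * t powr (- (2 * s))) \<longlongrightarrow> 0) at_top"
    proof -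
      have "((\<lambda>t::real. t powr (- (2 * s))) \<longlongrightarrow> 0) at_top"
        using s by (intro tendsto_neg_powr filterlim_ident) auto
      hence "((\<lambda>t::real. (- Cs s / (2 * s)) * t powr (- (2 * s))) \<longlongrightarrow> (- Cs s / (2 * s)) * 0) at_top"
        by (intro tendsto_mult tendsto_const)
      thus ?thesis by simp
    qed
  qed
  also have "\<dots> = ennreal (Cs s * a powr (- (2 * s)) / (2 * s))" by simp
  finally show ?thesis .
qed

lemma nu_greaterThan:
  assumes s: "0 < s" "s < 1" and a: "a > 0"
  shows "emeasure (mu_s s) {a<..} = ennreal (Cs s * a powr (- (2 * s)) / (2 * s))"
proof -
  have "emeasure (mu_s s) {a<..} = (\<integral>\<^sup>+ t. ennreal (if t > 0 then Cs s * t powr (- 1 - 2 * s) else 0) * indicator {a<..} t \<partial>lborel)"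
    unfolding mu_s_def by (rule emeasure_density) auto
  also have "\<dots> = (\<integral>\<^sup>+ t. ennreal (if t > 0 then Cs s * t powr (- 1 - 2 * s) else 0) * indicator {a..} t \<partial>lborel)"
    by (rule nn_integral_cong_AE) (use AE_lborel_singleton[of a] in \<open>eventually_elim, auto split: split_indicator\<close>)
  also have "\<dots> = emeasure (mu_s s) {a..}"
    unfolding mu_s_def by (rule emeasure_density[symmetric]) auto
  finally show ?thesis using nu_atLeast[OF s a] by simp
qed

lemma integrable_ind_bounded:
  fixes F :: "'b \<Rightarrow> real"
  assumes I: "integrable M (indicator A :: 'b \<Rightarrow> real)" and F: "F \<in> borel_measurable M"
    and B: "\<And>z. \<bar>F z\<bar> \<le> B"
  shows "integrable M (\<lambda>z. indicator A z * F z)"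
proof (rule Bochner_Integration.integrable_bound[where f="\<lambda>z. B * indicator A z"])
  show "integrable M (\<lambda>z. B * indicator A z)" using I by (rule integrable_mult_right)
  show "(\<lambda>z. indicator A z * F z) \<in> borel_measurable M"
    using borel_measurable_times[OF borel_measurable_integrable[OF I] F] by simp
  show "AE z in M. norm (indicator A z * F z) \<le> norm (B * indicator A z)"
  proof (rule AE_I2)
    fix z
    have B0: "0 \<le> B" using B[of z] by linarith
    show "norm (indicator A z * F z) \<le> norm (B * indicator A z)"
      using B[of z] B0 by (auto split: split_indicator)
  qed
qed

lemma avg_ineq:
  fixes a b P Q S :: real
  assumes a: "a > 0" and b: "b > 0" and P: "\<bar>P\<bar> \<le> S * a" and Q: "\<bar>Q\<bar> \<le> S * b"
  shows "\<bar>P / a - (P + Q) / (a + b)\<bar> \<le> 2 * S * (b / (a + b))"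
proof -
  have ab: "a * (a + b) > 0" using a b by simp
  have eq: "P / a - (P + Q) / (a + b) = (P * b - Q * a) / (a * (a + b))"
    using a b by (simp add: field_simps)
  have "\<bar>P * b - Q * a\<bar> \<le> \<bar>P * b\<bar> + \<bar>Q * a\<bar>" by (rule abs_triangle_ineq4)
  also have "\<dots> = \<bar>P\<bar> * b + \<bar>Q\<bar> * a" using a b by (simp add: abs_mult)
  also have "\<dots> \<le> S * a * b + S * b * a"
    using P Q a b by (intro add_mono mult_right_mono) auto
  also have "\<dots> = (2 * S * (b / (a + b))) * (a * (a + b))" using a b by (simp add: field_simps)
  finally have "\<bar>P * b - Q * a\<bar> \<le> (2 * S * (b / (a + b))) * (a * (a + b))" .
  hence "\<bar>P * b - Q * a\<bar> / (a * (a + b)) \<le> 2 * S * (b / (a + b))"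
    using ab by (simp add: divide_le_eq)
  thus ?thesis using ab by (simp add: eq abs_div)
qed

lemma nu_integral:
  assumes s: "0 < s" "s < 1" and e: "0 < \<epsilon>" and g[measurable]: "g \<in> borel_measurable borel"
  shows "(\<integral>t. indicator {\<epsilon><..} t * (indicator {..<R} t * g t) \<partial>(mu_s s))
       = Cs s * (\<integral>t. indicator {\<epsilon><..<R} t * (t powr (- 1 - 2 * s) * g t) \<partial>lborel)"
proof -
  have "(\<integral>t. indicator {\<epsilon><..} t * (indicator {..<R} t * g t) \<partial>(mu_s s))
      = (\<integral>t. (if t > 0 then Cs s * t powr (- 1 - 2 * s) else 0) *\<^sub>R (indicator {\<epsilon><..} t * (indicator {..<R} t * g t)) \<partial>lborel)"
    unfolding mu_s_def using Cs_pos[OF s] by (subst integral_density) (auto intro!: AE_I2)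
  also have "\<dots> = (\<integral>t. Cs s * (indicator {\<epsilon><..<R} t * (t powr (- 1 - 2 * s) * g t)) \<partial>lborel)"
    using e by (intro Bochner_Integration.integral_cong) (auto split: split_indicator)
  also have "\<dots> = Cs s * (\<integral>t. indicator {\<epsilon><..<R} t * (t powr (- 1 - 2 * s) * g t) \<partial>lborel)"
    by (rule integral_mult_right_zero)
  finally show ?thesis .
qed

lemma powr_combine:
  assumes t: "(t::real) > 0" and N: "N \<ge> 1"
  shows "t ^ (N - 1) * t powr (- real N - 2 * s) = t powr (- 1 - 2 * s)"
proof -
  have "t ^ (N - 1) = t powr real (N - 1)" using t by (simp add: powr_realpow)
  also have "real (N - 1) = real N - 1" using N by (simp add: of_nat_diff)
  finally have "t ^ (N - 1) * t powr (- real N - 2 * s) = t powr (real N - 1) * t powr (- real N - 2 * s)" by simp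
  also have "\<dots> = t powr (- 1 - 2 * s)" by (simp add: powr_add[symmetric])
  finally show ?thesis .
qed

lemma muN_integral:
  fixes y :: "'a::euclidean_space" and g :: "real \<Rightarrow> real"
  assumes y: "norm y = 1" and s: "0 < s" "s < 1" and al: "0 < \<alpha>" "\<alpha> < 1/2"
    and e: "0 < \<epsilon>" "\<epsilon> < R" and g[measurable]: "g \<in> borel_measurable borel"
  defines "c \<equiv> measure lborel ({z::'a. (1 - 2*\<alpha>\<^sup>2) * norm z < y \<bullet> z} \<inter> cball 0 1)"
  shows "(\<integral>z. indicator (Tset y \<epsilon> R \<alpha>) z * g (norm z) \<partial>(mu_sN s))
       = c * real DIM('a) * CNs DIM('a) s * (\<integral>t. indicator {\<epsilon><..<R} t * (t powr (- 1 - 2 * s) * g t) \<partial>lborel)"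
proof -
  let ?N = "DIM('a)"
  let ?K = "CNs ?N s"
  define k where "k = 1 - 2*\<alpha>\<^sup>2"
  have a2: "\<alpha>*\<alpha> < (1/2)*(1/2)" using al by (intro mult_strict_mono) auto
  have k: "0 < k" "k < 1" using a2 al by (auto simp: k_def power2_eq_square)
  define T where "T = {z::'a. k * norm z < y \<bullet> z} \<inter> {z. \<epsilon> < norm z \<and> norm z < R}"
  have TT: "Tset y \<epsilon> R \<alpha> = T" unfolding T_def k_def using Tset_char[OF y al] by auto
  have Tb[measurable]: "T \<in> sets borel" unfolding T_def by measurable
  have K0: "?K > 0" using CNs_pos[OF s] .
  have "(\<integral>z. indicator T z * g (norm z) \<partial>(mu_sN s))
      = (\<integral>z. (if z \<noteq> 0 then ?K * norm z powr (- real ?N - 2 * s) else 0) *\<^sub>R (indicator T z * g (norm z)) \<partial>lborel)"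
    unfolding mu_sN_def using K0 by (subst integral_density) (auto intro!: AE_I2)
  also have "\<dots> = (\<integral>z. indicator T z * (?K * norm z powr (- real ?N - 2 * s) * g (norm z)) \<partial>lborel)"
    using e by (intro Bochner_Integration.integral_cong) (auto simp: T_def split: split_indicator)
  also have "\<dots> = (\<integral>t. indicator {\<epsilon><..<R} t * (c * real ?N * t ^ (?N - 1)) * (?K * t powr (- real ?N - 2 * s) * g t) \<partial>lborel)"
    unfolding T_def c_def k_def by (rule radial_integral[OF y k[unfolded k_def] e]) measurable
  also have "\<dots> = (\<integral>t. (c * real ?N * ?K) * (indicator {\<epsilon><..<R} t * (t powr (- 1 - 2 * s) * g t)) \<partial>lborel)"
  proof (intro Bochner_Integration.integral_cong refl)
    fix t :: real
    show "indicator {\<epsilon><..<R} t * (c * real ?N * t ^ (?N - 1)) * (?K * t powr (- real ?N - 2 * s) * g t)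
        = (c * real ?N * ?K) * (indicator {\<epsilon><..<R} t * (t powr (- 1 - 2 * s) * g t))"
    proof (cases "t \<in> {\<epsilon><..<R}")
      case True
      hence t0: "t > 0" using e by simp
      have N1: "?N \<ge> 1" using DIM_positive[where 'a='a] by linarith
      have "t ^ (?N - 1) * t powr (- real ?N - 2 * s) = t powr (- 1 - 2 * s)" by (rule powr_combine[OF t0 N1])
      hence "indicator {\<epsilon><..<R} t * (c * real ?N * t ^ (?N - 1)) * (?K * t powr (- real ?N - 2 * s) * g t)
          = (c * real ?N * ?K) * (t ^ (?N - 1) * t powr (- real ?N - 2 * s)) * g t"
        using True by (simp add: ac_simps)
      thus ?thesis using True \<open>t ^ (?N - 1) * t powr (- real ?N - 2 * s) = t powr (- 1 - 2 * s)\<close> by simp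
    next
      case False
      thus ?thesis by simp
    qed
  qed
  also have "\<dots> = (c * real ?N * ?K) * (\<integral>t. indicator {\<epsilon><..<R} t * (t powr (- 1 - 2 * s) * g t) \<partial>lborel)"
    by (rule integral_mult_right_zero)
  finally show ?thesis using TT by simp
qed

theorem lemma5p1:
  fixes \<phi> :: "'a::euclidean_space \<Rightarrow> real"
    and x :: 'a and \<eta> s \<epsilon> R \<alpha> :: real
    and G :: "'a \<Rightarrow> 'a" and H :: "'a \<Rightarrow> ('a \<Rightarrow>\<^sub>L 'a)"
  assumes s: "1/2 < s" "s < 1"
    and eta: "\<eta> > 0"
    and bnd: "bounded (range \<phi>)"
    and meas: "\<phi> \<in> borel_measurable borel"
    and D1: "\<forall>z\<in>cball x \<eta>. (\<phi> has_derivative (\<lambda>h. G z \<bullet> h)) (at z within cball x \<eta>)"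
    and D1c: "continuous_on (cball x \<eta>) G"
    and D2: "\<forall>z\<in>cball x \<eta>. (G has_derivative blinfun_apply (H z)) (at z within cball x \<eta>)"
    and D2c: "continuous_on (cball x \<eta>) H"
    and uc: "uniformly_continuous_on (- cball x \<eta>) \<phi>"
    and eps: "0 < \<epsilon>" "\<epsilon> < \<eta>"
    and R: "R > max \<eta> 1"
    and alpha: "0 < \<alpha>" "\<alpha> < 1/2"
  shows "\<forall>y. norm y = 1 \<longrightarrow>
     \<bar>avg_mu_sN s (Tset y \<epsilon> R \<alpha>) (\<lambda>z. \<phi> (x + z)) - avg_mu_s s \<epsilon> (\<lambda>t. \<phi> (x + t *\<^sub>R y))\<bar>
     \<le> 2 * (\<epsilon> / R) powr (2 * s) * (SUP z. \<bar>\<phi> z\<bar>)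
       + max (2 * (norm (G x) + 2 * ((1/2) * (SUP z\<in>ball x \<eta>. norm (H z))) * \<eta>) * \<eta> * \<alpha>)
             (3 * R * modulus_out \<phi> x \<eta> \<alpha>)"
proof (intro allI impI)
  fix y :: 'a assume y: "norm y = 1"
  note meas[measurable]
  have s0: "0 < s" "s < 1" using s by auto
  have e: "0 < \<epsilon>" "\<epsilon> < R" using eps R by auto
  define Mx where "Mx = max (2 * (norm (G x) + 2 * ((1/2) * (SUP z\<in>ball x \<eta>. norm (H z))) * \<eta>) * \<eta> * \<alpha>)
             (3 * R * modulus_out \<phi> x \<eta> \<alpha>)"
  define S where "S = (SUP z. \<bar>\<phi> z\<bar>)"
  obtain M0 where M0: "\<forall>v\<in>range \<phi>. norm v \<le> M0" using bnd unfolding bounded_iff by blast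
  have bddS: "bdd_above (range (\<lambda>z. \<bar>\<phi> z\<bar>))" using M0 by (intro bdd_aboveI2[where M=M0]) auto
  have phiS: "\<bar>\<phi> z\<bar> \<le> S" for z unfolding S_def by (rule cSUP_upper[OF _ bddS]) simp
  define g where "g = (\<lambda>t. \<phi> (x + t *\<^sub>R y))"
  have gm[measurable]: "g \<in> borel_measurable borel" unfolding g_def by measurable
  have gS: "\<bar>g t\<bar> \<le> S" for t unfolding g_def by (rule phiS)
  define T where "T = Tset y \<epsilon> R \<alpha>"
  define k where "k = 1 - 2*\<alpha>\<^sup>2"
  have a2: "\<alpha>*\<alpha> < (1/2)*(1/2)" using alpha by (intro mult_strict_mono) auto
  have k: "0 < k" "k < 1" using a2 alpha by (auto simp: k_def power2_eq_square)
  have TT: "T = {z. k * norm z < y \<bullet> z \<and> \<epsilon> < norm z \<and> norm z < R}"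
    unfolding T_def k_def by (rule Tset_char[OF y alpha])
  have Tb[measurable]: "T \<in> sets borel" unfolding TT by measurable
  let ?N = "DIM('a)"
  define K where "K = CNs ?N s"
  define c where "c = measure lborel ({z::'a. k * norm z < y \<bullet> z} \<inter> cball 0 1)"
  define \<kappa> where "\<kappa> = c * real ?N * K"
  have K0: "K > 0" unfolding K_def by (rule CNs_pos[OF s0])
  have c0: "c > 0" unfolding c_def by (rule cone_facts(1)[OF y k])
  have kap0: "\<kappa> > 0" unfolding \<kappa>_def using K0 c0 by simp
  define J where "J = (\<lambda>h. \<integral>t. indicator {\<epsilon><..<R} t * (t powr (- 1 - 2 * s) * h t) \<partial>lborel)"
  have LemA: "(\<integral>z. indicator T z * h (norm z) \<partial>(mu_sN s)) = \<kappa> * J h"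
    if [measurable]: "h \<in> borel_measurable borel" for h
    unfolding T_def \<kappa>_def J_def K_def c_def k_def by (rule muN_integral[OF y s0 alpha e]) measurable
  have LemB: "(\<integral>t. indicator {\<epsilon><..} t * (indicator {..<R} t * h t) \<partial>(mu_s s)) = Cs s * J h"
    if [measurable]: "h \<in> borel_measurable borel" for h
    unfolding J_def by (rule nu_integral[OF s0 e(1)]) measurable
  have finT: "emeasure (mu_sN s :: 'a measure) T < \<infinity>"
  proof -
    have "emeasure (mu_sN s :: 'a measure) T
        = (\<integral>\<^sup>+ z. ennreal (if z \<noteq> 0 then K * norm z powr (- real ?N - 2 * s) else 0) * indicator T z \<partial>lborel)"
      unfolding mu_sN_def K_def by (rule emeasure_density) auto
    also have "\<dots> \<le> (\<integral>\<^sup>+ z. ennreal (K * \<epsilon> powr (- real ?N - 2 * s)) * indicator (cball (0::'a) R) z \<partial>lborel)"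
    proof (rule nn_integral_mono)
      fix z :: 'a
      show "ennreal (if z \<noteq> 0 then K * norm z powr (- real ?N - 2 * s) else 0) * indicator T z
          \<le> ennreal (K * \<epsilon> powr (- real ?N - 2 * s)) * indicator (cball 0 R) z"
      proof (cases "z \<in> T")
        case True
        hence z: "\<epsilon> < norm z" "norm z < R" using TT by auto
        hence "norm z powr (- real ?N - 2 * s) \<le> \<epsilon> powr (- real ?N - 2 * s)"
          using e s0 by (intro powr_mono2') auto
        hence "K * norm z powr (- real ?N - 2 * s) \<le> K * \<epsilon> powr (- real ?N - 2 * s)"
          using K0 by (intro mult_left_mono) auto
        moreover have "z \<noteq> 0" using z e by auto
        moreover have "z \<in> cball 0 R" using z by simp
        ultimately show ?thesis using True by (simp add: ennreal_leI)
      next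
        case False
        thus ?thesis by simp
      qed
    qed
    also have "\<dots> = ennreal (K * \<epsilon> powr (- real ?N - 2 * s)) * emeasure lborel (cball (0::'a) R)"
      by (rule nn_integral_cmult_indicator) simp
    also have "\<dots> < \<infinity>" using emeasure_lborel_cball_finite[of "0::'a" R]
      by (simp add: ennreal_mult_less_top)
    finally show ?thesis .
  qed
  have IT: "integrable (mu_sN s :: 'a measure) (indicator T :: 'a \<Rightarrow> real)"
    using finT Tb by (intro integrable_real_indicator) (auto simp: mu_sN_def)
  define \<mu>T where "\<mu>T = measure (mu_sN s :: 'a measure) T"
  have muT_eq: "\<mu>T = \<kappa> * J (\<lambda>_. 1)"
  proof -
    have "\<mu>T = (\<integral>z. indicator T z * (\<lambda>_. 1::real) (norm z) \<partial>(mu_sN s))"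
      unfolding \<mu>T_def by (simp add: mu_sN_def)
    also have "\<dots> = \<kappa> * J (\<lambda>_. 1)" by (rule LemA) simp
    finally show ?thesis .
  qed
  have R0: "R > 0" using e by simp
  have nuE: "emeasure (mu_s s) {\<epsilon><..} = ennreal (Cs s * \<epsilon> powr (- (2 * s)) / (2 * s))"
    by (rule nu_greaterThan[OF s0 e(1)])
  have nuR: "emeasure (mu_s s) {R..} = ennreal (Cs s * R powr (- (2 * s)) / (2 * s))"
    by (rule nu_atLeast[OF s0 R0])
  have Cs0: "Cs s > 0" by (rule Cs_pos[OF s0])
  define A where "A = Cs s * \<epsilon> powr (- (2 * s)) / (2 * s)"
  define B where "B = Cs s * R powr (- (2 * s)) / (2 * s)"
  have A0: "A \<ge> 0" "B > 0" using Cs0 s0 R0 e by (auto simp: A_def B_def intro!: divide_pos_pos mult_pos_pos divide_nonneg_pos mult_nonneg_nonneg)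
  have mA: "measure (mu_s s) {\<epsilon><..} = A" using nuE A0 by (simp add: measure_def A_def)
  have mB: "measure (mu_s s) {R..} = B" using nuR A0 by (simp add: measure_def B_def)
  have IE: "integrable (mu_s s) (indicator {\<epsilon><..} :: real \<Rightarrow> real)"
    using nuE by (intro integrable_real_indicator) (auto simp: mu_s_def)
  have IR: "integrable (mu_s s) (indicator {R..} :: real \<Rightarrow> real)"
    using nuR by (intro integrable_real_indicator) (auto simp: mu_s_def)
  have msets: "sets (mu_s s) = sets borel" by (simp add: mu_s_def)
  have spc: "space (mu_s s) = UNIV" by (simp add: mu_s_def)
  have split: "(\<integral>t. indicator {\<epsilon><..} t * h t \<partial>(mu_s s))
      = (\<integral>t. indicator {\<epsilon><..} t * (indicator {..<R} t * h t) \<partial>(mu_s s)) + (\<integral>t. indicator {R..} t * h t \<partial>(mu_s s))"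
    if hm[measurable]: "h \<in> borel_measurable borel" and hb: "\<And>t. \<bar>h t\<bar> \<le> Bh" for h :: "real \<Rightarrow> real" and Bh :: real
  proof -
    have i1: "integrable (mu_s s) (\<lambda>t. indicator {\<epsilon><..} t * (indicator {..<R} t * h t))"
    proof (rule integrable_ind_bounded[OF IE])
      show "(\<lambda>t. indicator {..<R} t * h t) \<in> borel_measurable (mu_s s)" using msets by simp
      show "\<bar>indicator {..<R} t * h t\<bar> \<le> Bh" for t using hb[of t] hb[of 0] by (auto split: split_indicator)
    qed
    have i2: "integrable (mu_s s) (\<lambda>t. indicator {R..} t * h t)"
      by (rule integrable_ind_bounded[OF IR _ hb]) (use msets in simp)
    have "(\<integral>t. indicator {\<epsilon><..} t * h t \<partial>(mu_s s))
        = (\<integral>t. indicator {\<epsilon><..} t * (indicator {..<R} t * h t) + indicator {R..} t * h t \<partial>(mu_s s))"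
      using e by (intro Bochner_Integration.integral_cong refl) (auto split: split_indicator)
    also have "\<dots> = (\<integral>t. indicator {\<epsilon><..} t * (indicator {..<R} t * h t) \<partial>(mu_s s)) + (\<integral>t. indicator {R..} t * h t \<partial>(mu_s s))"
      by (rule Bochner_Integration.integral_add[OF i1 i2])
    finally show ?thesis .
  qed
  have S0: "S \<ge> 0" using phiS[of x] by linarith
  define a where "a = Cs s * J (\<lambda>_. 1)"
  define P where "P = Cs s * J g"
  define Q where "Q = (\<integral>t. indicator {R..} t * g t \<partial>(mu_s s))"
  have AB: "A = a + B"
  proof -
    have "A = (\<integral>t. indicator {\<epsilon><..} t * (\<lambda>_. 1::real) t \<partial>(mu_s s))" using mA spc by simp
    also have "\<dots> = (\<integral>t. indicator {\<epsilon><..} t * (indicator {..<R} t * (\<lambda>_. 1::real) t) \<partial>(mu_s s)) + (\<integral>t. indicator {R..} t * (\<lambda>_. 1::real) t \<partial>(mu_s s))"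
      by (rule split[where Bh=1]) auto
    also have "(\<integral>t. indicator {\<epsilon><..} t * (indicator {..<R} t * (\<lambda>_. 1::real) t) \<partial>(mu_s s)) = a"
      unfolding a_def by (rule LemB) simp
    also have "(\<integral>t. indicator {R..} t * (\<lambda>_. 1::real) t \<partial>(mu_s s)) = B" using mB spc by simp
    finally show ?thesis .
  qed
  have avgs: "avg_mu_s s \<epsilon> g = (P + Q) / (a + B)"
  proof -
    have "(\<integral>t. indicator {\<epsilon><..} t * g t \<partial>(mu_s s)) = P + Q"
      unfolding P_def Q_def using split[OF gm gS] LemB[OF gm] by simp
    thus ?thesis unfolding avg_mu_s_def using mA AB by simp
  qed
  have AgtB: "B < A"
  proof -
    have "R powr (- (2 * s)) < \<epsilon> powr (- (2 * s))" using s0 e by (intro powr_less_mono2_neg) auto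
    thus ?thesis unfolding A_def B_def using Cs0 s0 by (simp add: divide_strict_right_mono)
  qed
  have a0: "a > 0" using AB AgtB by simp
  have Pb: "\<bar>P\<bar> \<le> S * a"
  proof -
    have "\<bar>P\<bar> = \<bar>\<integral>t. indicator {\<epsilon><..} t * (indicator {..<R} t * g t) \<partial>(mu_s s)\<bar>"
      unfolding P_def using LemB[OF gm] by simp
    also have "\<dots> \<le> (\<integral>t. S * (indicator {\<epsilon><..} t * (indicator {..<R} t * 1)) \<partial>(mu_s s))"
    proof (rule integral_abs_bound_integral)
      show "integrable (mu_s s) (\<lambda>t. indicator {\<epsilon><..} t * (indicator {..<R} t * g t))"
        by (rule integrable_ind_bounded[OF IE, where B=S]) (use msets gS S0 in \<open>auto split: split_indicator\<close>)
      show "integrable (mu_s s) (\<lambda>t. S * (indicator {\<epsilon><..} t * (indicator {..<R} t * 1)))"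
        by (intro integrable_mult_right integrable_ind_bounded[OF IE, where B=1]) (use msets in \<open>auto split: split_indicator\<close>)
      show "\<bar>indicator {\<epsilon><..} t * (indicator {..<R} t * g t)\<bar> \<le> S * (indicator {\<epsilon><..} t * (indicator {..<R} t * 1))" for t
        using gS[of t] by (auto split: split_indicator)
    qed
    also have "\<dots> = S * a"
      unfolding a_def using LemB[of "\<lambda>_. 1"] by simp
    finally show ?thesis .
  qed
  have Qb: "\<bar>Q\<bar> \<le> S * B"
  proof -
    have "\<bar>Q\<bar> \<le> (\<integral>t. S * indicator {R..} t \<partial>(mu_s s))"
      unfolding Q_def
    proof (rule integral_abs_bound_integral)
      show "integrable (mu_s s) (\<lambda>t. indicator {R..} t * g t)"
        by (rule integrable_ind_bounded[OF IR _ gS]) (use msets in simp)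
      show "integrable (mu_s s) (\<lambda>t. S * indicator {R..} t)" using IR by (rule integrable_mult_right)
      show "\<bar>indicator {R..} t * g t\<bar> \<le> S * indicator {R..} t" for t
        using gS[of t] by (auto split: split_indicator)
    qed
    also have "\<dots> = S * B" using mB spc by simp
    finally show ?thesis .
  qed
  have ratio: "B / (a + B) = (\<epsilon> / R) powr (2 * s)"
  proof -
    have "B / (a + B) = B / A" using AB by simp
    also have "\<dots> = R powr (- (2 * s)) / \<epsilon> powr (- (2 * s))"
      unfolding A_def B_def using Cs0 s0 by (simp add: field_simps)
    also have "\<dots> = (\<epsilon> / R) powr (2 * s)"
      using e by (simp add: powr_minus_divide powr_divide)
    finally show ?thesis .
  qed
  have oneD: "\<bar>P / a - avg_mu_s s \<epsilon> g\<bar> \<le> 2 * (\<epsilon> / R) powr (2 * s) * S"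
    using avg_ineq[OF a0 A0(2) Pb Qb] avgs ratio by (simp add: mult_ac)
  have J10: "J (\<lambda>_. 1) > 0" using a0 Cs0 unfolding a_def by (simp add: zero_less_mult_iff)
  have muT0: "\<mu>T > 0" using muT_eq kap0 J10 by simp
  have Eg: "(\<integral>z. indicator T z * g (norm z) \<partial>(mu_sN s)) = \<kappa> * J g" by (rule LemA[OF gm])
  have NS: "(\<lambda>z. indicator T z * g (norm z)) \<in> borel_measurable (mu_sN s :: 'a measure)"
    by (simp add: mu_sN_def)
  have Ifm: "integrable (mu_sN s :: 'a measure) (\<lambda>z. indicator T z * \<phi> (x + z))"
    by (rule integrable_ind_bounded[OF IT _ phiS]) (simp add: mu_sN_def)
  have Igm: "integrable (mu_sN s :: 'a measure) (\<lambda>z. indicator T z * g (norm z))"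
    by (rule integrable_ind_bounded[OF IT _ gS]) (simp add: mu_sN_def)
  have diffb: "\<bar>(\<integral>z. indicator T z * \<phi> (x + z) \<partial>(mu_sN s)) - (\<integral>z. indicator T z * g (norm z) \<partial>(mu_sN s))\<bar> \<le> Mx * \<mu>T"
  proof -
    have "(\<integral>z. indicator T z * \<phi> (x + z) \<partial>(mu_sN s)) - (\<integral>z. indicator T z * g (norm z) \<partial>(mu_sN s))
        = (\<integral>z. indicator T z * \<phi> (x + z) - indicator T z * g (norm z) \<partial>(mu_sN s :: 'a measure))"
      by (rule Bochner_Integration.integral_diff[OF Ifm Igm, symmetric])
    also have "\<bar>\<dots>\<bar> \<le> (\<integral>z. indicator T z * Mx \<partial>(mu_sN s :: 'a measure))"
    proof (rule integral_abs_bound_integral)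
      show "integrable (mu_sN s :: 'a measure) (\<lambda>z. indicator T z * \<phi> (x + z) - indicator T z * g (norm z))"
        using Ifm Igm by (rule Bochner_Integration.integrable_diff)
      show "integrable (mu_sN s :: 'a measure) (\<lambda>z. indicator T z * Mx)" using IT by (rule integrable_mult_left)
      show "\<bar>indicator T z * \<phi> (x + z) - indicator T z * g (norm z)\<bar> \<le> indicator T z * Mx" for z
      proof (cases "z \<in> T")
        case True
        hence z: "k * norm z < y \<bullet> z" "norm z < R" using TT by auto
        have "\<bar>\<phi> (x + z) - \<phi> (x + norm z *\<^sub>R y)\<bar> \<le> Mx"
          unfolding Mx_def
          by (rule pointwise[OF eta bnd D1 D1c D2 D2c R alpha y _ z(2)]) (use z(1) in \<open>simp add: k_def\<close>)
        thus ?thesis using True by (simp add: g_def)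
      next
        case False
        thus ?thesis by simp
      qed
    qed
    also have "\<dots> = Mx * \<mu>T" unfolding \<mu>T_def by (simp add: mu_sN_def mult.commute)
    finally show ?thesis .
  qed
  have avgN: "avg_mu_sN s T (\<lambda>z. \<phi> (x + z)) = (\<integral>z. indicator T z * \<phi> (x + z) \<partial>(mu_sN s)) / \<mu>T"
    unfolding avg_mu_sN_def \<mu>T_def by simp
  have EgmuT: "(\<integral>z. indicator T z * g (norm z) \<partial>(mu_sN s :: 'a measure)) / \<mu>T = P / a"
    unfolding Eg muT_eq P_def a_def using kap0 Cs0 J10 by (simp add: field_simps)
  have part1: "\<bar>avg_mu_sN s T (\<lambda>z. \<phi> (x + z)) - P / a\<bar> \<le> Mx"
  proof -
    have "avg_mu_sN s T (\<lambda>z. \<phi> (x + z)) - P / a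
        = ((\<integral>z. indicator T z * \<phi> (x + z) \<partial>(mu_sN s)) - (\<integral>z. indicator T z * g (norm z) \<partial>(mu_sN s :: 'a measure))) / \<mu>T"
      using avgN EgmuT muT0 by (simp add: diff_divide_distrib)
    hence "\<bar>avg_mu_sN s T (\<lambda>z. \<phi> (x + z)) - P / a\<bar>
        = \<bar>(\<integral>z. indicator T z * \<phi> (x + z) \<partial>(mu_sN s)) - (\<integral>z. indicator T z * g (norm z) \<partial>(mu_sN s :: 'a measure))\<bar> / \<mu>T"
      using muT0 by simp
    also have "\<dots> \<le> Mx * \<mu>T / \<mu>T" using diffb muT0 by (intro divide_right_mono) auto
    also have "\<dots> = Mx" using muT0 by simp
    finally show ?thesis .
  qed
  have "\<bar>avg_mu_sN s T (\<lambda>z. \<phi> (x + z)) - avg_mu_s s \<epsilon> g\<bar>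
      \<le> \<bar>avg_mu_sN s T (\<lambda>z. \<phi> (x + z)) - P / a\<bar> + \<bar>P / a - avg_mu_s s \<epsilon> g\<bar>"
    using abs_triangle_ineq[of "avg_mu_sN s T (\<lambda>z. \<phi> (x + z)) - P / a" "P / a - avg_mu_s s \<epsilon> g"] by simp
  also have "\<dots> \<le> Mx + 2 * (\<epsilon> / R) powr (2 * s) * S" using part1 oneD by (rule add_mono)
  finally show "\<bar>avg_mu_sN s (Tset y \<epsilon> R \<alpha>) (\<lambda>z. \<phi> (x + z)) - avg_mu_s s \<epsilon> (\<lambda>t. \<phi> (x + t *\<^sub>R y))\<bar>
     \<le> 2 * (\<epsilon> / R) powr (2 * s) * (SUP z. \<bar>\<phi> z\<bar>) + Mx"
    unfolding T_def g_def S_def by simp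
qed

end
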